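(* If $\{P^{a,n}\}_{(a,n)\in\mathcal I\times\mathbb Z}$ and $\{Q^{a,n}\}_{(a,n)\in\mathcal I\times\mathbb Z}$ are collections of polynomials in $\mathcal O$ with widening gap, then the collection $\Big\{\sum_{(b,m)\in\mathcal I\times\mathbb Z}P^{b,m}\,\frac{\partial Q^{a,n}}{\partial X^{b,m}}\Big\}_{(a,n)\in\mathcal I\times\mathbb Z}$ has widening gap (and hence, given a further collection $\{R^{a,n}\}$ with widening gap, so does $\big\{\sum_{(b,m),(c,p)}P^{b,m}\frac{\partial Q^{c,p}}{\partial X^{b,m}}\frac{\partial R^{a,n}}{\partial X^{c,p}}\big\}_{(a,n)}$, and so on).
   Context: $\mathcal I$ is a finite index set and $\mathcal O=\mathbb C[X^{a,n}]_{(a,n)\in\mathcal I\times\mathbb Z}$. A collection $\{P^{a,n}\}_{(a,n)\in\mathcal I\times\mathbb Z}$ of polynomials in $\mathcal O$ has widening gap if, for every $K\ge1$, $P^{a,n}\in\mathbb C[X^{b,m}:|m|<|n|-K,\ b\in\mathcal I]$ for all $a\in\mathcal I$, for all but finitely many $n\in\mathbb Z$. (Each sum over $(b,m)$ above has only finitely many nonzero terms since $Q^{a,n}$ is a polynomial.) *)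

theory Defs
  imports Complex_Main "HOL-Library.Poly_Mapping" "HOL-Library.Groups_Big_Fun"
begin

text \<open>Polynomials with complex coefficients in variables of type 'v:
  finitely supported maps from monomials (finitely supported exponent vectors)
  to coefficients.  Multiplication is the convolution product of Poly_Mapping.\<close>
type_synonym 'v cpoly = "('v \<Rightarrow>\<^sub>0 nat) \<Rightarrow>\<^sub>0 complex"

definition pvars :: "'v cpoly \<Rightarrow> 'v set" where
  "pvars p = \<Union> (Poly_Mapping.keys ` Poly_Mapping.keys p)"

definition pdiff :: "'v \<Rightarrow> 'v cpoly \<Rightarrow> 'v cpoly" where
  "pdiff v p = (\<Sum>mon \<in> Poly_Mapping.keys p.
      Poly_Mapping.single (mon - Poly_Mapping.single v 1)
        (of_nat (Poly_Mapping.lookup mon v) * Poly_Mapping.lookup p mon))"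

text \<open>Widening gap for a family indexed by I x Z (variables X^(b,m), (b,m) in I x Z).
  P^(a,n) lies in C[X^(b,m) : |m| < |n| - K] iff all its variables have |m| < |n| - K.\<close>
definition widening_gap :: "('i \<times> int \<Rightarrow> ('i \<times> int) cpoly) \<Rightarrow> bool" where
  "widening_gap P \<longleftrightarrow>
     (\<forall>K::int. K \<ge> 1 \<longrightarrow>
        finite {n::int. \<not> (\<forall>a. pvars (P (a, n)) \<subseteq> {(b, m). \<bar>m\<bar> < \<bar>n\<bar> - K})})"

end

theory Submission
  imports Defs
begin

lemma pvars_finite: "finite (pvars p)"
  unfolding pvars_def by auto

lemma pvars_zero [simp]: "pvars 0 = {}"
  unfolding pvars_def by simp

lemma pvars_add: "pvars (p + q) \<subseteq> pvars p \<union> pvars q"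
  unfolding pvars_def using keys_add[of p q] by blast

lemma pvars_sum: "pvars (sum f A) \<subseteq> (\<Union>x\<in>A. pvars (f x))"
proof (induction A rule: infinite_finite_induct)
  case (insert x F)
  then show ?case using pvars_add[of "f x" "sum f F"] by auto
qed auto

lemma pvars_mult: "pvars (p * q) \<subseteq> pvars p \<union> pvars q"
proof
  fix v assume "v \<in> pvars (p * q)"
  then obtain mon where m: "mon \<in> Poly_Mapping.keys (p * q)" "v \<in> Poly_Mapping.keys mon"
    unfolding pvars_def by auto
  then obtain a b where ab: "mon = a + b" "a \<in> Poly_Mapping.keys p" "b \<in> Poly_Mapping.keys q"
    using keys_mult[of p q] by blast
  have "v \<in> Poly_Mapping.keys a \<union> Poly_Mapping.keys b"
    using m(2) ab(1) keys_add[of a b] by blast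
  then show "v \<in> pvars p \<union> pvars q" using ab unfolding pvars_def by blast
qed

lemma pvars_single: "pvars (Poly_Mapping.single k c) \<subseteq> Poly_Mapping.keys k"
  unfolding pvars_def by simp

lemma keys_minus_nat: "Poly_Mapping.keys ((mon::'v \<Rightarrow>\<^sub>0 nat) - r) \<subseteq> Poly_Mapping.keys mon"
  by (auto simp: in_keys_iff lookup_minus)

lemma pvars_pdiff: "pvars (pdiff v p) \<subseteq> pvars p"
proof
  fix w assume w0: "w \<in> pvars (pdiff v p)"
  define g where "g = (\<lambda>mon. Poly_Mapping.single (mon - Poly_Mapping.single v 1)
        (of_nat (Poly_Mapping.lookup mon v) * Poly_Mapping.lookup p mon :: complex))"
  have "pdiff v p = sum g (Poly_Mapping.keys p)" unfolding pdiff_def g_def by (rule refl)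
  with w0 have "w \<in> pvars (sum g (Poly_Mapping.keys p))" by simp
  then have "w \<in> (\<Union>mon\<in>Poly_Mapping.keys p. pvars (g mon))" by (rule subsetD[OF pvars_sum])
  then obtain mon where mon: "mon \<in> Poly_Mapping.keys p" "w \<in> pvars (g mon)" by (rule UN_E)
  have "w \<in> Poly_Mapping.keys (mon - Poly_Mapping.single v 1)"
    using mon(2) pvars_single unfolding g_def by (rule subsetD[rotated])
  then have "w \<in> Poly_Mapping.keys mon" by (rule subsetD[OF keys_minus_nat])
  then show "w \<in> pvars p" using mon(1) unfolding pvars_def by (rule UN_I[rotated])
qed

lemma pdiff_zero: "v \<notin> pvars p \<Longrightarrow> pdiff v p = 0"
  unfolding pdiff_def pvars_def
  by (intro sum.neutral) (auto simp: in_keys_iff)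

lemma pvars_Sum_any: "pvars (Sum_any f) \<subseteq> (\<Union>x. pvars (f x))"
  using pvars_sum[of f "{a. f a \<noteq> 0}"] by (auto simp: Sum_any.expand_set)

theorem corollary3p2:
  fixes P Q :: "('i::finite) \<times> int \<Rightarrow> ('i \<times> int) cpoly"
  assumes "widening_gap P" and "widening_gap Q"
  shows "widening_gap (\<lambda>(a, n). \<Sum>v. P v * pdiff v (Q (a, n)))"
proof -
  define FP where "FP = {n::int. \<not> (\<forall>a. pvars (P (a, n)) \<subseteq> {(b, m). \<bar>m\<bar> < \<bar>n\<bar> - 1})}"
  have fFP: "finite FP" using assms(1) unfolding widening_gap_def FP_def by auto
  define S where "S = (\<Union>m\<in>FP. \<Union>b. pvars (P (b, m)))"
  have fS: "finite S" unfolding S_def using fFP by (auto intro!: finite_UN_I pvars_finite)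
  define B where "B = (\<Sum>x\<in>S. \<bar>snd x\<bar>)"
  have SB: "\<bar>snd x\<bar> \<le> B" if "x \<in> S" for x
    unfolding B_def using fS that by (intro member_le_sum) auto
  show ?thesis unfolding widening_gap_def
  proof (intro allI impI)
    fix K :: int assume K: "K \<ge> 1"
    define FQ where "FQ = {n::int. \<not> (\<forall>a. pvars (Q (a, n)) \<subseteq> {(b, m). \<bar>m\<bar> < \<bar>n\<bar> - K})}"
    have fFQ: "finite FQ" using assms(2) K unfolding widening_gap_def FQ_def by auto
    have sub: "{n::int. \<not> (\<forall>a. pvars ((\<lambda>(a, n). \<Sum>v. P v * pdiff v (Q (a, n))) (a, n))
                 \<subseteq> {(b, m). \<bar>m\<bar> < \<bar>n\<bar> - K})} \<subseteq> FQ \<union> {-(B+K)..B+K}"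
    proof (rule subsetI, rule ccontr)
      fix n assume n1: "n \<in> {n::int. \<not> (\<forall>a. pvars ((\<lambda>(a, n). \<Sum>v. P v * pdiff v (Q (a, n))) (a, n))
                 \<subseteq> {(b, m). \<bar>m\<bar> < \<bar>n\<bar> - K})}"
        and n2: "n \<notin> FQ \<union> {-(B+K)..B+K}"
      from n2 have "n \<notin> FQ" by blast
      then have nQ': "\<forall>a. pvars (Q (a, n)) \<subseteq> {(b, m). \<bar>m\<bar> < \<bar>n\<bar> - K}"
        unfolding FQ_def by simp
      have nQ: "pvars (Q (a', n)) \<subseteq> {(b, m). \<bar>m\<bar> < \<bar>n\<bar> - K}" for a' using nQ' by (rule spec)
      from n2 have "n \<notin> {-(B+K)..B+K}" by blast
      then have nB: "\<bar>n\<bar> > B + K" by auto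
      from n1 obtain a where a: "\<not> pvars (\<Sum>v. P v * pdiff v (Q (a, n))) \<subseteq> {(b, m). \<bar>m\<bar> < \<bar>n\<bar> - K}"
        by (simp only: mem_Collect_eq case_prod_conv) blast
      then obtain w where w: "w \<in> pvars (\<Sum>v. P v * pdiff v (Q (a, n)))"
        and wbad: "w \<notin> {(b, m). \<bar>m\<bar> < \<bar>n\<bar> - K}" by blast
      from w pvars_Sum_any[of "\<lambda>v. P v * pdiff v (Q (a, n))"] obtain v where v: "w \<in> pvars (P v * pdiff v (Q (a, n)))" by blast
      have vQ: "v \<in> pvars (Q (a, n))"
      proof (rule ccontr)
        assume "v \<notin> pvars (Q (a, n))"
        then have "pdiff v (Q (a, n)) = 0" by (rule pdiff_zero)
        then show False using v by simp
      qed
      obtain b m where vbm: "v = (b, m)" by (cases v)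
      have m: "\<bar>m\<bar> < \<bar>n\<bar> - K" using subsetD[OF nQ[of a] vQ] vbm by simp
      have "w \<in> pvars (P v) \<union> pvars (pdiff v (Q (a, n)))" by (rule subsetD[OF pvars_mult v])
      then show False
      proof (rule UnE)
        assume wP: "w \<in> pvars (P v)"
        show False
        proof (cases "m \<in> FP")
          case True
          then have "w \<in> S" unfolding S_def using wP vbm by (intro UN_I[of m] UN_I[of b]) simp_all
          then have "\<bar>snd w\<bar> \<le> B" by (rule SB)
          then show False using wbad nB by (cases w) simp
        next
          case False
          then have sb: "pvars (P (b, m)) \<subseteq> {(b, m'). \<bar>m'\<bar> < \<bar>m\<bar> - 1}" unfolding FP_def by simp
          have wP': "w \<in> pvars (P (b, m))" using wP vbm by simp
          have "w \<in> {(b, m'). \<bar>m'\<bar> < \<bar>m\<bar> - 1}" by (rule subsetD[OF sb wP'])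
          then have "\<bar>snd w\<bar> < \<bar>m\<bar> - 1" by (cases w) simp
          then show False using m wbad by (cases w) simp
        qed
      next
        assume "w \<in> pvars (pdiff v (Q (a, n)))"
        then have "w \<in> pvars (Q (a, n))" using pvars_pdiff[of v "Q (a, n)"] by blast
        then show False using subsetD[OF nQ[of a]] wbad by blast
      qed
    qed
    show "finite {n::int. \<not> (\<forall>a. pvars ((\<lambda>(a, n). \<Sum>v. P v * pdiff v (Q (a, n))) (a, n))
                 \<subseteq> {(b, m). \<bar>m\<bar> < \<bar>n\<bar> - K})}"
      by (rule finite_subset[OF sub finite_UnI[OF fFQ]]) simp
  qed
qed

end
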